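(* Let $R$ be a commutative ring and $(M_t,M_h;\mu_a,\mu_b)$ an object of $\mathrm{Rep}_R(\varkappa)$. Put $K=\ker(\mu_a)\cap\ker(\mu_b)$, $L_t=M_t/K$, $L_h=M_h$, $\lambda_a(m+K)=\mu_a(m)$, $\lambda_b(m+K)=\mu_b(m)$, $f_t(m)=m+K$ and $f_h=\mathrm{id}_{M_h}$. Then $(f_t,f_h)\colon(M_t,M_h;\mu_a,\mu_b)\to(L_t,L_h;\lambda_a,\lambda_b)$ is a $\mathrm{Rel}_R(\varkappa)$-envelope.
   Context: $\mathrm{Rep}_R(\varkappa)$: objects $(M_t,M_h;\mu_a,\mu_b)$ with $\mu_a,\mu_b\in\mathrm{Hom}_R(M_t,M_h)$, morphisms pairs $(f_t,f_h)$ of $R$-linear maps with $f_h\mu_c=\mu'_cf_t$ ($c=a,b$). $\mathrm{Rel}_R(\varkappa)$: full subcategory of objects with $\ker(\mu_a)\cap\ker(\mu_b)=0$. For a full subcategory $\mathcal{C}$, a $\mathcal{C}$-preenvelope of $M$ is a morphism $b\colon M\to N$ with $N\in\mathcal{C}$ such that every morphism $M\to C$ with $C\in\mathcal{C}$ factors as $ab$; a $\mathcal{C}$-envelope is a preenvelope $b$ such that every endomorphism $a$ of $N$ with $ab=b$ is an isomorphism. *)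

theory Defs
  imports "HOL-Algebra.Module" "HOL-Algebra.AbelCoset"
begin

definition lin_map :: "('r, 'x) ring_scheme \<Rightarrow> ('r, 'a) module \<Rightarrow> ('r, 'b) module \<Rightarrow> ('a \<Rightarrow> 'b) \<Rightarrow> bool" where
  "lin_map R M N f \<longleftrightarrow> f \<in> carrier M \<rightarrow> carrier N
     \<and> (\<forall>x\<in>carrier M. \<forall>y\<in>carrier M. f (x \<oplus>\<^bsub>M\<^esub> y) = f x \<oplus>\<^bsub>N\<^esub> f y)
     \<and> (\<forall>r\<in>carrier R. \<forall>x\<in>carrier M. f (r \<odot>\<^bsub>M\<^esub> x) = r \<odot>\<^bsub>N\<^esub> f x)"

text \<open>Objects of Rep_R(kappa): (M_t, M_h, mu_a, mu_b).\<close>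
type_synonym ('r, 'a, 'b) rep = "('r, 'a) module \<times> ('r, 'b) module \<times> ('a \<Rightarrow> 'b) \<times> ('a \<Rightarrow> 'b)"

definition rep_obj :: "('r, 'x) ring_scheme \<Rightarrow> ('r, 'a, 'b) rep \<Rightarrow> bool" where
  "rep_obj R X = (case X of (Mt, Mh, ma, mb) \<Rightarrow>
     module R Mt \<and> module R Mh \<and> lin_map R Mt Mh ma \<and> lin_map R Mt Mh mb)"

definition rel_obj :: "('r, 'x) ring_scheme \<Rightarrow> ('r, 'a, 'b) rep \<Rightarrow> bool" where
  "rel_obj R X = (rep_obj R X \<and> (case X of (Mt, Mh, ma, mb) \<Rightarrow>
     {m \<in> carrier Mt. ma m = \<zero>\<^bsub>Mh\<^esub>} \<inter> {m \<in> carrier Mt. mb m = \<zero>\<^bsub>Mh\<^esub>} = {\<zero>\<^bsub>Mt\<^esub>}))"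

definition rep_mor :: "('r, 'x) ring_scheme \<Rightarrow> ('r, 'a, 'b) rep \<Rightarrow> ('r, 'c, 'd) rep
     \<Rightarrow> ('a \<Rightarrow> 'c) \<times> ('b \<Rightarrow> 'd) \<Rightarrow> bool" where
  "rep_mor R X Y f = (rep_obj R X \<and> rep_obj R Y \<and> (case X of (Mt, Mh, ma, mb) \<Rightarrow> case Y of (Nt, Nh, na, nb) \<Rightarrow>
     case f of (ft, fh) \<Rightarrow>
       lin_map R Mt Nt ft \<and> lin_map R Mh Nh fh
       \<and> (\<forall>m\<in>carrier Mt. fh (ma m) = na (ft m))
       \<and> (\<forall>m\<in>carrier Mt. fh (mb m) = nb (ft m))))"

definition rep_comp :: "('c \<Rightarrow> 'e) \<times> ('d \<Rightarrow> 'g) \<Rightarrow> ('a \<Rightarrow> 'c) \<times> ('b \<Rightarrow> 'd) \<Rightarrow> ('a \<Rightarrow> 'e) \<times> ('b \<Rightarrow> 'g)" where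
  "rep_comp g f = (fst g \<circ> fst f, snd g \<circ> snd f)"

definition mor_eq :: "('r, 'a, 'b) rep \<Rightarrow> ('a \<Rightarrow> 'c) \<times> ('b \<Rightarrow> 'd) \<Rightarrow> ('a \<Rightarrow> 'c) \<times> ('b \<Rightarrow> 'd) \<Rightarrow> bool" where
  "mor_eq X f g = (case X of (Mt, Mh, ma, mb) \<Rightarrow>
     (\<forall>m\<in>carrier Mt. fst f m = fst g m) \<and> (\<forall>m\<in>carrier Mh. snd f m = snd g m))"

definition rep_iso :: "('r, 'x) ring_scheme \<Rightarrow> ('r, 'a, 'b) rep \<Rightarrow> ('r, 'c, 'd) rep
     \<Rightarrow> ('a \<Rightarrow> 'c) \<times> ('b \<Rightarrow> 'd) \<Rightarrow> bool" where
  "rep_iso R X Y f = (rep_mor R X Y f \<and> (\<exists>g. rep_mor R Y X g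
     \<and> mor_eq X (rep_comp g f) (id, id) \<and> mor_eq Y (rep_comp f g) (id, id)))"

text \<open>The test objects C range over all objects of
  Rel_R(kappa) whose underlying modules live in the types 'c, 'd (supplied via TYPE(...));
  used with free type variables this quantifies over all objects.\<close>
definition rel_preenvelope :: "('c \<times> 'd) itself \<Rightarrow> ('r, 'x) ring_scheme \<Rightarrow> ('r, 'a, 'b) rep
     \<Rightarrow> ('r, 'e, 'g) rep \<Rightarrow> ('a \<Rightarrow> 'e) \<times> ('b \<Rightarrow> 'g) \<Rightarrow> bool" where
  "rel_preenvelope T R X N b = (rel_obj R N \<and> rep_mor R X N b \<and>
     (\<forall>(C :: ('r, 'c, 'd) rep) g. rel_obj R C \<and> rep_mor R X C g \<longrightarrow>
        (\<exists>a. rep_mor R N C a \<and> mor_eq X g (rep_comp a b))))"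

definition rel_envelope :: "('c \<times> 'd) itself \<Rightarrow> ('r, 'x) ring_scheme \<Rightarrow> ('r, 'a, 'b) rep
     \<Rightarrow> ('r, 'e, 'g) rep \<Rightarrow> ('a \<Rightarrow> 'e) \<times> ('b \<Rightarrow> 'g) \<Rightarrow> bool" where
  "rel_envelope T R X N b = (rel_preenvelope T R X N b \<and>
     (\<forall>a. rep_mor R N N a \<and> mor_eq X (rep_comp a b) b \<longrightarrow> rep_iso R N N a))"

definition quot_module :: "('r, 'x) ring_scheme \<Rightarrow> ('r, 'a) module \<Rightarrow> 'a set \<Rightarrow> ('r, 'a set) module" where
  "quot_module R M K = \<lparr>carrier = A_RCOSETS M K, mult = undefined, one = undefined,
     zero = K, add = set_add M,
     smult = (\<lambda>r C. K +>\<^bsub>M\<^esub> (r \<odot>\<^bsub>M\<^esub> (SOME m. m \<in> C)))\<rparr>"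

end

theory Submission
  imports Defs
begin

lemma lin_hom:
  assumes "module R M" "module R N" "lin_map R M N f"
  shows "abelian_group_hom M N f"
proof -
  interpret M: module R M by fact
  interpret N: module R N by fact
  show ?thesis
    apply (rule abelian_group_homI)
      apply (rule M.abelian_group_axioms)
     apply (rule N.abelian_group_axioms)
    using assms(3) M.a_group N.a_group
    by (auto simp: group_hom_def group_hom_axioms_def hom_def lin_map_def)
qed

lemma comm_group_transfer:
  assumes "comm_group G" "carrier H = carrier G" "mult H = mult G" "one H = one G"
  shows "comm_group H"
proof -
  interpret G: comm_group G by (rule assms(1))
  show ?thesis
  proof (rule comm_groupI)
    show "\<one>\<^bsub>H\<^esub> \<in> carrier H" unfolding assms(2,4) by (rule G.one_closed)
    fix x y z assume x: "x \<in> carrier H" and y: "y \<in> carrier H" and z: "z \<in> carrier H"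
    then have x': "x \<in> carrier G" and y': "y \<in> carrier G" and z': "z \<in> carrier G"
      unfolding assms(2) by auto
    show "x \<otimes>\<^bsub>H\<^esub> y \<in> carrier H" unfolding assms(2,3) using x' y' by (rule G.m_closed)
    show "x \<otimes>\<^bsub>H\<^esub> y \<otimes>\<^bsub>H\<^esub> z = x \<otimes>\<^bsub>H\<^esub> (y \<otimes>\<^bsub>H\<^esub> z)"
      unfolding assms(3) using x' y' z' by (rule G.m_assoc)
    show "x \<otimes>\<^bsub>H\<^esub> y = y \<otimes>\<^bsub>H\<^esub> x" unfolding assms(3) using x' y' by (rule G.m_comm)
    show "\<one>\<^bsub>H\<^esub> \<otimes>\<^bsub>H\<^esub> x = x" unfolding assms(3,4) using x' by (rule G.l_one)
    show "\<exists>y\<in>carrier H. y \<otimes>\<^bsub>H\<^esub> x = \<one>\<^bsub>H\<^esub>" unfolding assms(2,3,4) using x' by (rule G.l_inv_ex)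
  qed
qed

locale qs =
  fixes R :: "('r, 'x) ring_scheme" and Mt :: "('r, 'a) module" and Mh :: "('r, 'b) module"
    and ma mb :: "'a \<Rightarrow> 'b" and K
  assumes cR: "cring R" and mt: "module R Mt" and mh: "module R Mh"
    and la: "lin_map R Mt Mh ma" and lb: "lin_map R Mt Mh mb"
    and K: "K = {m \<in> carrier Mt. ma m = \<zero>\<^bsub>Mh\<^esub>} \<inter> {m \<in> carrier Mt. mb m = \<zero>\<^bsub>Mh\<^esub>}"
begin

sublocale T: module R Mt by (rule mt)
sublocale H: module R Mh by (rule mh)
sublocale A: abelian_group_hom Mt Mh ma by (rule lin_hom[OF mt mh la])
sublocale B: abelian_group_hom Mt Mh mb by (rule lin_hom[OF mt mh lb])

lemma Ksub: "additive_subgroup K Mt"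
  unfolding additive_subgroup_def
proof (rule subgroup.intro)
  show "K \<subseteq> carrier (add_monoid Mt)" by (auto simp: K)
  show "\<one>\<^bsub>add_monoid Mt\<^esub> \<in> K" by (simp add: K)
  fix x y assume x: "x \<in> K" and y: "y \<in> K"
  then have xc: "x \<in> carrier Mt" and yc: "y \<in> carrier Mt" and
    xa: "ma x = \<zero>\<^bsub>Mh\<^esub>" "mb x = \<zero>\<^bsub>Mh\<^esub>" and
    ya: "ma y = \<zero>\<^bsub>Mh\<^esub>" "mb y = \<zero>\<^bsub>Mh\<^esub>" by (auto simp: K)
  show "x \<otimes>\<^bsub>add_monoid Mt\<^esub> y \<in> K"
    using xc yc xa ya by (simp add: K)
  show "inv\<^bsub>add_monoid Mt\<^esub> x \<in> K"
  proof -
    have e: "inv\<^bsub>add_monoid Mt\<^esub> x = \<ominus>\<^bsub>Mt\<^esub> x" by (simp add: a_inv_def)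
    have z: "\<ominus>\<^bsub>Mh\<^esub> \<zero>\<^bsub>Mh\<^esub> = \<zero>\<^bsub>Mh\<^esub>" using H.add.inv_one by (simp add: a_inv_def)
    have "ma (\<ominus>\<^bsub>Mt\<^esub> x) = \<zero>\<^bsub>Mh\<^esub>" unfolding A.hom_a_inv[OF xc] xa(1) z by (rule refl)
    moreover have "mb (\<ominus>\<^bsub>Mt\<^esub> x) = \<zero>\<^bsub>Mh\<^esub>" unfolding B.hom_a_inv[OF xc] xa(2) z by (rule refl)
    moreover have "\<ominus>\<^bsub>Mt\<^esub> x \<in> carrier Mt" using xc by (rule T.a_inv_closed)
    ultimately show ?thesis unfolding e K by (intro IntI CollectI conjI)
  qed
qed

sublocale KS: abelian_subgroup K Mt
  by (rule abelian_subgroupI3[OF Ksub T.abelian_group_axioms])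


abbreviation "Q \<equiv> quot_module R Mt K"

lemma Q_simps: "carrier Q = a_rcosets\<^bsub>Mt\<^esub> K" "zero Q = K" "add Q = set_add Mt"
  "smult Q = (\<lambda>r C. K +>\<^bsub>Mt\<^esub> (r \<odot>\<^bsub>Mt\<^esub> (SOME m. m \<in> C)))"
  by (simp_all add: quot_module_def)

lemma Q_comm: "comm_group (add_monoid Q)"
  by (rule comm_group_transfer[OF KS.a_factorgroup_is_comm_group])
     (simp_all add: Q_simps A_FactGroup_def')

lemma Q_ab: "abelian_group Q"
proof (rule abelian_group.intro)
  show "abelian_monoid Q" unfolding abelian_monoid_def by (rule comm_group.axioms(1)[OF Q_comm])
  show "abelian_group_axioms Q" unfolding abelian_group_axioms_def by (rule Q_comm)
qed

lemma carrierQ_E: assumes "C \<in> carrier Q" obtains m where "m \<in> carrier Mt" "C = K +>\<^bsub>Mt\<^esub> m"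
proof -
  have "C \<in> (\<Union>a\<in>carrier Mt. {K +>\<^bsub>Mt\<^esub> a})" using assms unfolding Q_simps A_RCOSETS_def' .
  then show thesis using that by blast
qed

lemma coset_elem: assumes "m \<in> carrier Mt" "x \<in> K +>\<^bsub>Mt\<^esub> m"
  shows "\<exists>k\<in>K. x = k \<oplus>\<^bsub>Mt\<^esub> m"
  using assms(2) unfolding a_r_coset_def' by blast

lemma some_in: assumes "m \<in> carrier Mt" shows "(SOME x. x \<in> K +>\<^bsub>Mt\<^esub> m) \<in> K +>\<^bsub>Mt\<^esub> m"
  using KS.a_rcos_self[OF assms] by (rule someI)

lemma coset_vals: assumes "m \<in> carrier Mt" "x \<in> K +>\<^bsub>Mt\<^esub> m"
  shows "x \<in> carrier Mt" "ma x = ma m" "mb x = mb m"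
proof -
  obtain k where k: "k \<in> K" "x = k \<oplus>\<^bsub>Mt\<^esub> m" using coset_elem[OF assms] by blast
  have kc: "k \<in> carrier Mt" "ma k = \<zero>\<^bsub>Mh\<^esub>" "mb k = \<zero>\<^bsub>Mh\<^esub>" using k(1) unfolding K by blast+
  show "x \<in> carrier Mt" unfolding k(2) by (rule T.a_closed[OF kc(1) assms(1)])
  show "ma x = ma m" unfolding k(2) A.hom_add[OF kc(1) assms(1)] kc(2) by (rule H.l_zero[OF A.hom_closed[OF assms(1)]])
  show "mb x = mb m" unfolding k(2) B.hom_add[OF kc(1) assms(1)] kc(3) by (rule H.l_zero[OF B.hom_closed[OF assms(1)]])
qed

lemma smult_Q: assumes "r \<in> carrier R" "m \<in> carrier Mt"
  shows "r \<odot>\<^bsub>Q\<^esub> (K +>\<^bsub>Mt\<^esub> m) = K +>\<^bsub>Mt\<^esub> (r \<odot>\<^bsub>Mt\<^esub> m)"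
proof -
  define x where "x = (SOME x. x \<in> K +>\<^bsub>Mt\<^esub> m)"
  have xin: "x \<in> K +>\<^bsub>Mt\<^esub> m" using some_in[OF assms(2)] by (simp add: x_def)
  obtain k where k: "k \<in> K" "x = k \<oplus>\<^bsub>Mt\<^esub> m" using coset_elem[OF assms(2) xin] by blast
  have kc: "k \<in> carrier Mt" "ma k = \<zero>\<^bsub>Mh\<^esub>" "mb k = \<zero>\<^bsub>Mh\<^esub>" using k(1) unfolding K by blast+
  have rkc: "r \<odot>\<^bsub>Mt\<^esub> k \<in> carrier Mt" using assms(1) kc(1) by (rule T.smult_closed)
  have "ma (r \<odot>\<^bsub>Mt\<^esub> k) = r \<odot>\<^bsub>Mh\<^esub> ma k" using la assms(1) kc(1) unfolding lin_map_def by blast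
  then have rka: "ma (r \<odot>\<^bsub>Mt\<^esub> k) = \<zero>\<^bsub>Mh\<^esub>" unfolding kc(2) using H.smult_r_null[OF assms(1)] by simp
  have "mb (r \<odot>\<^bsub>Mt\<^esub> k) = r \<odot>\<^bsub>Mh\<^esub> mb k" using lb assms(1) kc(1) unfolding lin_map_def by blast
  then have rkb: "mb (r \<odot>\<^bsub>Mt\<^esub> k) = \<zero>\<^bsub>Mh\<^esub>" unfolding kc(3) using H.smult_r_null[OF assms(1)] by simp
  have rk: "r \<odot>\<^bsub>Mt\<^esub> k \<in> K" unfolding K using rkc rka rkb by blast
  have "r \<odot>\<^bsub>Mt\<^esub> x = r \<odot>\<^bsub>Mt\<^esub> k \<oplus>\<^bsub>Mt\<^esub> r \<odot>\<^bsub>Mt\<^esub> m"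
    unfolding k(2) by (rule T.smult_r_distr[OF assms(1) kc(1) assms(2)])
  then have "r \<odot>\<^bsub>Mt\<^esub> x \<in> K +>\<^bsub>Mt\<^esub> (r \<odot>\<^bsub>Mt\<^esub> m)"
    using rk unfolding a_r_coset_def' by blast
  then have "K +>\<^bsub>Mt\<^esub> (r \<odot>\<^bsub>Mt\<^esub> m) = K +>\<^bsub>Mt\<^esub> (r \<odot>\<^bsub>Mt\<^esub> x)"
    by (rule KS.a_repr_independence'[OF _ T.smult_closed[OF assms]])
  then show ?thesis by (simp add: Q_simps x_def)
qed

lemma add_Q: "x \<in> carrier Mt \<Longrightarrow> y \<in> carrier Mt \<Longrightarrow>
   (K +>\<^bsub>Mt\<^esub> x) \<oplus>\<^bsub>Q\<^esub> (K +>\<^bsub>Mt\<^esub> y) = K +>\<^bsub>Mt\<^esub> (x \<oplus>\<^bsub>Mt\<^esub> y)"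
  by (simp add: Q_simps KS.a_rcos_sum)

lemma cos_in_Q: "x \<in> carrier Mt \<Longrightarrow> K +>\<^bsub>Mt\<^esub> x \<in> carrier Q"
  unfolding Q_simps by (rule T.a_rcosetsI[OF KS.a_subset])

lemma Q_module: "module R Q"
proof (rule moduleI[OF cR Q_ab])
  fix a C assume a: "a \<in> carrier R" and C: "C \<in> carrier Q"
  obtain x where x: "x \<in> carrier Mt" "C = K +>\<^bsub>Mt\<^esub> x" using C by (rule carrierQ_E)
  show "a \<odot>\<^bsub>Q\<^esub> C \<in> carrier Q" using a x by (simp add: smult_Q cos_in_Q)
next
  fix a b C assume a: "a \<in> carrier R" and b: "b \<in> carrier R" and C: "C \<in> carrier Q"
  obtain x where x: "x \<in> carrier Mt" "C = K +>\<^bsub>Mt\<^esub> x" using C by (rule carrierQ_E)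
  show "(a \<oplus>\<^bsub>R\<^esub> b) \<odot>\<^bsub>Q\<^esub> C = a \<odot>\<^bsub>Q\<^esub> C \<oplus>\<^bsub>Q\<^esub> b \<odot>\<^bsub>Q\<^esub> C"
    using a b x by (simp add: smult_Q add_Q T.smult_l_distr)
next
  fix a b C assume a: "a \<in> carrier R" and b: "b \<in> carrier R" and C: "C \<in> carrier Q"
  obtain x where x: "x \<in> carrier Mt" "C = K +>\<^bsub>Mt\<^esub> x" using C by (rule carrierQ_E)
  show "(a \<otimes>\<^bsub>R\<^esub> b) \<odot>\<^bsub>Q\<^esub> C = a \<odot>\<^bsub>Q\<^esub> (b \<odot>\<^bsub>Q\<^esub> C)"
    using a b x by (simp add: smult_Q T.smult_assoc1)
next
  fix C assume C: "C \<in> carrier Q"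
  obtain x where x: "x \<in> carrier Mt" "C = K +>\<^bsub>Mt\<^esub> x" using C by (rule carrierQ_E)
  show "\<one>\<^bsub>R\<^esub> \<odot>\<^bsub>Q\<^esub> C = C"
    using x by (simp add: smult_Q)
next
  fix a C D assume a: "a \<in> carrier R" and C: "C \<in> carrier Q" and D: "D \<in> carrier Q"
  obtain x where x: "x \<in> carrier Mt" "C = K +>\<^bsub>Mt\<^esub> x" using C by (rule carrierQ_E)
  obtain y where y: "y \<in> carrier Mt" "D = K +>\<^bsub>Mt\<^esub> y" using D by (rule carrierQ_E)
  show "a \<odot>\<^bsub>Q\<^esub> (C \<oplus>\<^bsub>Q\<^esub> D) = a \<odot>\<^bsub>Q\<^esub> C \<oplus>\<^bsub>Q\<^esub> a \<odot>\<^bsub>Q\<^esub> D"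
    using a x y by (simp add: smult_Q add_Q T.smult_r_distr)
qed


lemma kill_K:
  assumes N: "module R N" and g: "lin_map R Mt N g" and z: "\<forall>k\<in>K. g k = \<zero>\<^bsub>N\<^esub>"
    and m: "m \<in> carrier Mt" and x: "x \<in> K +>\<^bsub>Mt\<^esub> m"
  shows "g x = g m"
proof -
  interpret NN: module R N by (rule N)
  interpret G: abelian_group_hom Mt N g by (rule lin_hom[OF mt N g])
  obtain k where k: "k \<in> K" "x = k \<oplus>\<^bsub>Mt\<^esub> m" using coset_elem[OF m x] by blast
  have kc: "k \<in> carrier Mt" using k(1) unfolding K by blast
  have gk: "g k = \<zero>\<^bsub>N\<^esub>" using z k(1) by blast
  show ?thesis unfolding k(2) G.hom_add[OF kc m] gk by (rule NN.l_zero[OF G.hom_closed[OF m]])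
qed

lemma induced_val:
  assumes N: "module R N" and g: "lin_map R Mt N g" and z: "\<forall>k\<in>K. g k = \<zero>\<^bsub>N\<^esub>"
    and m: "m \<in> carrier Mt"
  shows "g (SOME x. x \<in> K +>\<^bsub>Mt\<^esub> m) = g m"
  by (rule kill_K[OF N g z m some_in[OF m]])

lemma induced_lin:
  assumes N: "module R N" and g: "lin_map R Mt N g" and z: "\<forall>k\<in>K. g k = \<zero>\<^bsub>N\<^esub>"
  shows "lin_map R Q N (\<lambda>D. g (SOME x. x \<in> D))"
proof -
  interpret NN: module R N by (rule N)
  interpret G: abelian_group_hom Mt N g by (rule lin_hom[OF mt N g])
  have iv: "\<And>m. m \<in> carrier Mt \<Longrightarrow> g (SOME x. x \<in> K +>\<^bsub>Mt\<^esub> m) = g m"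
    by (rule induced_val[OF N g z])
  show ?thesis unfolding lin_map_def
  proof (intro conjI ballI)
    show "(\<lambda>D. g (SOME x. x \<in> D)) \<in> carrier Q \<rightarrow> carrier N"
    proof
      fix D assume "D \<in> carrier Q"
      then obtain m where m: "m \<in> carrier Mt" "D = K +>\<^bsub>Mt\<^esub> m" by (rule carrierQ_E)
      show "g (SOME x. x \<in> D) \<in> carrier N" unfolding m(2) iv[OF m(1)] by (rule G.hom_closed[OF m(1)])
    qed
  next
    fix C D assume C: "C \<in> carrier Q" and D: "D \<in> carrier Q"
    obtain x where x: "x \<in> carrier Mt" "C = K +>\<^bsub>Mt\<^esub> x" using C by (rule carrierQ_E)
    obtain y where y: "y \<in> carrier Mt" "D = K +>\<^bsub>Mt\<^esub> y" using D by (rule carrierQ_E)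
    have xy: "x \<oplus>\<^bsub>Mt\<^esub> y \<in> carrier Mt" using x(1) y(1) by (rule T.a_closed)
    show "g (SOME m. m \<in> C \<oplus>\<^bsub>Q\<^esub> D) = g (SOME m. m \<in> C) \<oplus>\<^bsub>N\<^esub> g (SOME m. m \<in> D)"
      unfolding x(2) y(2) add_Q[OF x(1) y(1)] iv[OF xy] iv[OF x(1)] iv[OF y(1)]
      by (rule G.hom_add[OF x(1) y(1)])
  next
    fix r C assume r: "r \<in> carrier R" and C: "C \<in> carrier Q"
    obtain x where x: "x \<in> carrier Mt" "C = K +>\<^bsub>Mt\<^esub> x" using C by (rule carrierQ_E)
    have rx: "r \<odot>\<^bsub>Mt\<^esub> x \<in> carrier Mt" using r x(1) by (rule T.smult_closed)
    show "g (SOME m. m \<in> r \<odot>\<^bsub>Q\<^esub> C) = r \<odot>\<^bsub>N\<^esub> g (SOME m. m \<in> C)"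
      unfolding x(2) smult_Q[OF r x(1)] iv[OF rx] iv[OF x(1)]
      using g r x(1) unfolding lin_map_def by blast
  qed
qed

lemma ma_kill: "\<forall>k\<in>K. ma k = \<zero>\<^bsub>Mh\<^esub>" and mb_kill: "\<forall>k\<in>K. mb k = \<zero>\<^bsub>Mh\<^esub>"
  unfolding K by blast+

lemma N_rel: "rel_obj R (Q, Mh, (\<lambda>C. ma (SOME m. m \<in> C)), (\<lambda>C. mb (SOME m. m \<in> C)))"
  unfolding rel_obj_def rep_obj_def
proof (simp only: prod.case, intro conjI)
  show "module R Q" by (rule Q_module)
  show "module R Mh" by (rule mh)
  show "lin_map R Q Mh (\<lambda>C. ma (SOME m. m \<in> C))" by (rule induced_lin[OF mh la ma_kill])
  show "lin_map R Q Mh (\<lambda>C. mb (SOME m. m \<in> C))" by (rule induced_lin[OF mh lb mb_kill])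
  show "{m \<in> carrier Q. ma (SOME x. x \<in> m) = \<zero>\<^bsub>Mh\<^esub>} \<inter> {m \<in> carrier Q. mb (SOME x. x \<in> m) = \<zero>\<^bsub>Mh\<^esub>} = {\<zero>\<^bsub>Q\<^esub>}"
  proof (intro equalityI subsetI)
    fix D assume D: "D \<in> {m \<in> carrier Q. ma (SOME x. x \<in> m) = \<zero>\<^bsub>Mh\<^esub>} \<inter> {m \<in> carrier Q. mb (SOME x. x \<in> m) = \<zero>\<^bsub>Mh\<^esub>}"
    then have Dc: "D \<in> carrier Q" by blast
    obtain m where m: "m \<in> carrier Mt" "D = K +>\<^bsub>Mt\<^esub> m" using Dc by (rule carrierQ_E)
    have "ma m = \<zero>\<^bsub>Mh\<^esub>" "mb m = \<zero>\<^bsub>Mh\<^esub>"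
      using D induced_val[OF mh la ma_kill m(1)] induced_val[OF mh lb mb_kill m(1)] unfolding m(2) by auto
    then have "m \<in> K" unfolding K using m(1) by blast
    then have "D = K" unfolding m(2) by (rule KS.a_rcos_const)
    then show "D \<in> {\<zero>\<^bsub>Q\<^esub>}" by (simp add: Q_simps)
  next
    fix D assume "D \<in> {\<zero>\<^bsub>Q\<^esub>}"
    then have D: "D = K" by (simp add: Q_simps)
    have z0: "\<zero>\<^bsub>Mt\<^esub> \<in> K" using KS.zero_closed .
    have "(SOME x. x \<in> K) \<in> K" using z0 by (rule someI)
    then have "ma (SOME x. x \<in> K) = \<zero>\<^bsub>Mh\<^esub>" "mb (SOME x. x \<in> K) = \<zero>\<^bsub>Mh\<^esub>" unfolding K by blast+
    moreover have "K \<in> carrier Q" unfolding Q_simps by (rule KS.a_subgroup_in_rcosets)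
    ultimately show "D \<in> {m \<in> carrier Q. ma (SOME x. x \<in> m) = \<zero>\<^bsub>Mh\<^esub>} \<inter> {m \<in> carrier Q. mb (SOME x. x \<in> m) = \<zero>\<^bsub>Mh\<^esub>}"
      unfolding D by blast
  qed
qed


lemma lin_id: "module R M \<Longrightarrow> lin_map R M M id"
  unfolding lin_map_def by auto

lemma X_obj: "rep_obj R (Mt, Mh, ma, mb)"
  unfolding rep_obj_def using mt mh la lb by simp

lemma N_obj: "rep_obj R (Q, Mh, (\<lambda>C. ma (SOME m. m \<in> C)), (\<lambda>C. mb (SOME m. m \<in> C)))"
  using N_rel unfolding rel_obj_def by blast

lemma b_mor: "rep_mor R (Mt, Mh, ma, mb) (Q, Mh, (\<lambda>C. ma (SOME m. m \<in> C)), (\<lambda>C. mb (SOME m. m \<in> C)))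
           (\<lambda>m. K +>\<^bsub>Mt\<^esub> m, id)"
  unfolding rep_mor_def
proof (simp only: prod.case, intro conjI ballI)
  show "rep_obj R (Mt, Mh, ma, mb)" by (rule X_obj)
  show "rep_obj R (Q, Mh, (\<lambda>C. ma (SOME m. m \<in> C)), (\<lambda>C. mb (SOME m. m \<in> C)))" by (rule N_obj)
  show "lin_map R Mh Mh id" by (rule lin_id[OF mh])
  show "lin_map R Mt Q (\<lambda>m. K +>\<^bsub>Mt\<^esub> m)" unfolding lin_map_def
  proof (intro conjI ballI)
    show "(\<lambda>m. K +>\<^bsub>Mt\<^esub> m) \<in> carrier Mt \<rightarrow> carrier Q" using cos_in_Q by blast
    fix x y assume x: "x \<in> carrier Mt" and y: "y \<in> carrier Mt"
    show "K +>\<^bsub>Mt\<^esub> (x \<oplus>\<^bsub>Mt\<^esub> y) = (K +>\<^bsub>Mt\<^esub> x) \<oplus>\<^bsub>Q\<^esub> (K +>\<^bsub>Mt\<^esub> y)"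
      by (rule add_Q[OF x y, symmetric])
  next
    fix r x assume r: "r \<in> carrier R" and x: "x \<in> carrier Mt"
    show "K +>\<^bsub>Mt\<^esub> (r \<odot>\<^bsub>Mt\<^esub> x) = r \<odot>\<^bsub>Q\<^esub> (K +>\<^bsub>Mt\<^esub> x)"
      by (rule smult_Q[OF r x, symmetric])
  qed
  fix m assume m: "m \<in> carrier Mt"
  show "id (ma m) = ma (SOME x. x \<in> K +>\<^bsub>Mt\<^esub> m)" using induced_val[OF mh la ma_kill m] by simp
  show "id (mb m) = mb (SOME x. x \<in> K +>\<^bsub>Mt\<^esub> m)" using induced_val[OF mh lb mb_kill m] by simp
qed

lemma main: "rel_envelope TYPE('c \<times> 'd) R (Mt, Mh, ma, mb)
           (Q, Mh, (\<lambda>C. ma (SOME m. m \<in> C)), (\<lambda>C. mb (SOME m. m \<in> C)))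
           (\<lambda>m. K +>\<^bsub>Mt\<^esub> m, id)"
  unfolding rel_envelope_def rel_preenvelope_def
proof (intro conjI allI impI)
  show "rel_obj R (Q, Mh, (\<lambda>C. ma (SOME m. m \<in> C)), (\<lambda>C. mb (SOME m. m \<in> C)))" by (rule N_rel)
  show "rep_mor R (Mt, Mh, ma, mb) (Q, Mh, (\<lambda>C. ma (SOME m. m \<in> C)), (\<lambda>C. mb (SOME m. m \<in> C)))
           (\<lambda>m. K +>\<^bsub>Mt\<^esub> m, id)" by (rule b_mor)
next
  fix C :: "('r, 'c, 'd) rep" and g :: "('a \<Rightarrow> 'c) \<times> ('b \<Rightarrow> 'd)"
  assume Cg: "rel_obj R C \<and> rep_mor R (Mt, Mh, ma, mb) C g"
  obtain Ct Ch ca cb where Cd: "C = (Ct, Ch, ca, cb)" by (cases C) auto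
  obtain gt gh where gd: "g = (gt, gh)" by (cases g) auto
  have Cobj: "rep_obj R C" and Cker: "{m \<in> carrier Ct. ca m = \<zero>\<^bsub>Ch\<^esub>} \<inter> {m \<in> carrier Ct. cb m = \<zero>\<^bsub>Ch\<^esub>} = {\<zero>\<^bsub>Ct\<^esub>}"
    using Cg unfolding Cd rel_obj_def by simp_all
  have ct: "module R Ct" and ch: "module R Ch" and lca: "lin_map R Ct Ch ca" and lcb: "lin_map R Ct Ch cb"
    using Cobj unfolding Cd rep_obj_def by simp_all
  have lgt: "lin_map R Mt Ct gt" and lgh: "lin_map R Mh Ch gh"
    and ga: "\<forall>m\<in>carrier Mt. gh (ma m) = ca (gt m)" and gb: "\<forall>m\<in>carrier Mt. gh (mb m) = cb (gt m)"
    using Cg unfolding Cd gd rep_mor_def by simp_all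
  interpret GH: abelian_group_hom Mh Ch gh by (rule lin_hom[OF mh ch lgh])
  interpret GT: abelian_group_hom Mt Ct gt by (rule lin_hom[OF mt ct lgt])
  have gkill: "\<forall>k\<in>K. gt k = \<zero>\<^bsub>Ct\<^esub>"
  proof
    fix k assume k: "k \<in> K"
    then have kc: "k \<in> carrier Mt" "ma k = \<zero>\<^bsub>Mh\<^esub>" "mb k = \<zero>\<^bsub>Mh\<^esub>" unfolding K by blast+
    have "ca (gt k) = \<zero>\<^bsub>Ch\<^esub>" using ga kc(1) kc(2) GH.hom_zero by metis
    moreover have "cb (gt k) = \<zero>\<^bsub>Ch\<^esub>" using gb kc(1) kc(3) GH.hom_zero by metis
    moreover have "gt k \<in> carrier Ct" using kc(1) by (rule GT.hom_closed)
    ultimately have "gt k \<in> {\<zero>\<^bsub>Ct\<^esub>}" unfolding Cker[symmetric] by blast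
    then show "gt k = \<zero>\<^bsub>Ct\<^esub>" by blast
  qed
  have iv: "\<And>m. m \<in> carrier Mt \<Longrightarrow> gt (SOME x. x \<in> K +>\<^bsub>Mt\<^esub> m) = gt m"
    by (rule induced_val[OF ct lgt gkill])
  let ?a = "(\<lambda>D. gt (SOME x. x \<in> D), gh)"
  have "rep_mor R (Q, Mh, (\<lambda>C. ma (SOME m. m \<in> C)), (\<lambda>C. mb (SOME m. m \<in> C))) C ?a"
    unfolding Cd rep_mor_def
  proof (simp only: prod.case, intro conjI ballI)
    show "rep_obj R (Q, Mh, (\<lambda>C. ma (SOME m. m \<in> C)), (\<lambda>C. mb (SOME m. m \<in> C)))" by (rule N_obj)
    show "rep_obj R (Ct, Ch, ca, cb)" using Cobj Cd by simp
    show "lin_map R Q Ct (\<lambda>D. gt (SOME x. x \<in> D))" by (rule induced_lin[OF ct lgt gkill])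
    show "lin_map R Mh Ch gh" by (rule lgh)
    fix D assume D: "D \<in> carrier Q"
    obtain m where m: "m \<in> carrier Mt" "D = K +>\<^bsub>Mt\<^esub> m" using D by (rule carrierQ_E)
    show "gh (ma (SOME m. m \<in> D)) = ca (gt (SOME x. x \<in> D))"
      unfolding m(2) iv[OF m(1)] induced_val[OF mh la ma_kill m(1)] using ga m(1) by blast
    show "gh (mb (SOME m. m \<in> D)) = cb (gt (SOME x. x \<in> D))"
      unfolding m(2) iv[OF m(1)] induced_val[OF mh lb mb_kill m(1)] using gb m(1) by blast
  qed
  moreover have "mor_eq (Mt, Mh, ma, mb) g (rep_comp ?a (\<lambda>m. K +>\<^bsub>Mt\<^esub> m, id))"
    unfolding mor_eq_def rep_comp_def gd using iv by simp
  ultimately show "\<exists>a. rep_mor R (Q, Mh, (\<lambda>C. ma (SOME m. m \<in> C)), (\<lambda>C. mb (SOME m. m \<in> C))) C a \<and>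
             mor_eq (Mt, Mh, ma, mb) g (rep_comp a (\<lambda>m. K +>\<^bsub>Mt\<^esub> m, id))" by blast
next
  fix a :: "('a set \<Rightarrow> 'a set) \<times> ('b \<Rightarrow> 'b)"
  let ?N = "(Q, Mh, (\<lambda>C. ma (SOME m. m \<in> C)), (\<lambda>C. mb (SOME m. m \<in> C)))"
  assume A: "rep_mor R ?N ?N a \<and> mor_eq (Mt, Mh, ma, mb) (rep_comp a (\<lambda>m. K +>\<^bsub>Mt\<^esub> m, id)) (\<lambda>m. K +>\<^bsub>Mt\<^esub> m, id)"
  obtain at ah where ad: "a = (at, ah)" by (cases a) auto
  have at: "\<forall>m\<in>carrier Mt. at (K +>\<^bsub>Mt\<^esub> m) = K +>\<^bsub>Mt\<^esub> m" and ah: "\<forall>m\<in>carrier Mh. ah m = m"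
    using A unfolding ad mor_eq_def rep_comp_def by simp_all
  have atQ: "\<forall>D\<in>carrier Q. at D = D"
  proof
    fix D assume D: "D \<in> carrier Q"
    obtain m where m: "m \<in> carrier Mt" "D = K +>\<^bsub>Mt\<^esub> m" using D by (rule carrierQ_E)
    show "at D = D" using at m by simp
  qed
  have idm: "rep_mor R ?N ?N (id, id)"
    unfolding rep_mor_def using N_obj lin_id[OF Q_module] lin_id[OF mh] by simp
  have "mor_eq ?N (rep_comp (id, id) a) (id, id)" "mor_eq ?N (rep_comp a (id, id)) (id, id)"
    unfolding mor_eq_def rep_comp_def ad using atQ ah by simp_all
  then show "rep_iso R ?N ?N a" unfolding rep_iso_def using A idm by blast
qed

end
theorem lemma3p7:
  fixes R :: "('r, 'x) ring_scheme"
    and Mt :: "('r, 'a) module" and Mh :: "('r, 'b) module"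
    and ma mb :: "'a \<Rightarrow> 'b"
  assumes "cring R"
    and "rep_obj R (Mt, Mh, ma, mb)"
  defines "K \<equiv> {m \<in> carrier Mt. ma m = \<zero>\<^bsub>Mh\<^esub>} \<inter> {m \<in> carrier Mt. mb m = \<zero>\<^bsub>Mh\<^esub>}"
  shows "rel_envelope TYPE('c \<times> 'd) R (Mt, Mh, ma, mb)
           (quot_module R Mt K, Mh, (\<lambda>C. ma (SOME m. m \<in> C)), (\<lambda>C. mb (SOME m. m \<in> C)))
           (\<lambda>m. K +>\<^bsub>Mt\<^esub> m, id)"
proof -
  have h: "module R Mt" "module R Mh" "lin_map R Mt Mh ma" "lin_map R Mt Mh mb"
    using assms(2) unfolding rep_obj_def by simp_all
  interpret qs R Mt Mh ma mb K
    by (rule qs.intro[OF assms(1) h]) (simp add: K_def)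
  show ?thesis by (rule main)
qed

end
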